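(* Let $a,b\in\mathbb{C}$ with $ab\neq0,\ ab\neq1,\ ab\neq-1$. Then the Lie superalgebra $\Gamma$ defined in the context is isomorphic to the Lie subsuperalgebra of $\mathrm{End}(\tilde{\mathcal{W}}^{2|2})$ spanned by the following matrices (writing $u=\tau^{-1}\circ t^{-1}\in\tilde{\mathcal W}$): $$\tilde C_+=(t\tau)I_4,\quad \tilde C=I_4,\quad \tilde C_-=u\,I_4,$$ $$\tilde E_1=E_{12},\ \tilde F_1=E_{21},\ \tilde H_1=E_{11}-E_{22},\ \tilde E_2=E_{43},\ \tilde F_2=E_{34},\ \tilde H_2=E_{33}-E_{44},$$ $$\tilde T_3=(t\tau)E_{13}+aE_{42},\quad \tilde T_2=-(t\tau)E_{14}+aE_{32},\quad \tilde D_4=(t\tau)E_{24}+aE_{31},\quad \tilde D_1=-(t\tau)E_{23}+aE_{41},$$ $$\tilde T_1=bE_{14}+uE_{32},\quad \tilde T_4=bE_{13}-uE_{42},\quad \tilde D_2=bE_{23}+uE_{41},\quad \tilde D_3=bE_{24}-uE_{31}.$$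
   Context: The Lie superalgebra $\Gamma$ (a contraction of $D(2,1;\alpha)$ as $\alpha\to1$) has basis consisting of odd elements $T_1,T_2,T_3,T_4,D_1,D_2,D_3,D_4$ and even elements $E_1,H_1,F_1,E_2,H_2,F_2,C,C_+,C_-$, with the following nonzero brackets: $[T_1,T_3]=[T_2,T_4]=E_1$; $[D_1,D_3]=[D_2,D_4]=F_1$; $[E_1,D_1]=-2T_3$, $[E_1,D_3]=-2T_1$, $[E_1,D_2]=-2T_4$, $[E_1,D_4]=-2T_2$; $[F_1,T_1]=2D_3$, $[F_1,T_3]=2D_1$, $[F_1,T_2]=2D_4$, $[F_1,T_4]=2D_2$; $[E_2,T_1]=-T_4$, $[E_2,T_2]=T_3$, $[E_2,D_4]=D_1$, $[E_2,D_3]=-D_2$; $[F_2,T_4]=T_1$, $[F_2,T_3]=-T_2$, $[F_2,D_1]=-D_4$, $[F_2,D_2]=D_3$; $[E_1,F_1]=-4H_1$, $[E_2,F_2]=-H_2$, $[H_i,E_i]=2E_i$, $[H_i,F_i]=-2F_i$ ($i=1,2$); $[H_1,T_k]=T_k$, $[H_1,D_k]=-D_k$ ($k=1,\dots,4$); $[H_2,T_1]=-T_1$, $[H_2,T_2]=-T_2$, $[H_2,T_3]=T_3$, $[H_2,T_4]=T_4$, $[H_2,D_1]=D_1$, $[H_2,D_2]=D_2$, $[H_2,D_3]=-D_3$, $[H_2,D_4]=-D_4$; $[T_1,D_4]=-2F_2$, $[T_2,D_3]=2F_2$, $[D_1,T_4]=2E_2$, $[D_2,T_3]=-2E_2$;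 $[T_3,D_4]=C_+$, $[T_4,D_3]=C_-$, $[T_1,D_2]=-C_-$, $[T_2,D_1]=-C_+$; $[T_1,D_1]=H_1+H_2-\tfrac{C}{2}$, $[T_2,D_2]=H_1+H_2+\tfrac{C}{2}$, $[T_3,D_3]=H_1-H_2+\tfrac{C}{2}$, $[T_4,D_4]=H_1-H_2-\tfrac{C}{2}$. Brackets obtained from these by super-antisymmetry $[Y,X]=-(-1)^{p(X)p(Y)}[X,Y]$ are understood, and all other brackets of basis elements are zero (in particular $C,C_+,C_-$ are central). $\tilde{\mathcal W}$ is the associative algebra of pseudodifferential symbols on the circle: formal series $A=\sum_{i=-\infty}^{n}a_i(t)\tau^i$ with $a_i\in\mathbb{C}[t,t^{-1}]$, $n\in\mathbb{Z}$, with product $A\circ B=\sum_{n\ge0}\frac1{n!}\,\partial_\tau^nA\,\partial_t^nB$. $\mathrm{End}(\tilde{\mathcal W}^{2|2})$ is the Lie superalgebra of $4\times4$ matrices over $\tilde{\mathcal W}$, rows/columns $1,2$ even and $3,4$ odd (a matrix is even if entries at $(k,l)$ with $k,l$ of different parity vanish, odd if entries with $k,l$ of the same parity vanish), with matrix product computed using $\circ$ and bracket $[X,Y]=XY-(-1)^{p(X)p(Y)}YX$. $E_{kl}$ is the matrix unit at position $(k,l)$, $wE_{kl}$ has $w\in\tilde{\mathcal W}$ there, and $I_4$ is the identity matrix. *)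

theory Defs
  imports Complex_Main
begin

datatype gb = T1 | T2 | T3 | T4 | D1 | D2 | D3 | D4
  | E1 | H1 | F1 | E2 | H2 | F2 | C | Cp | Cm

lemma gb_UNIV: "(UNIV :: gb set) = {T1,T2,T3,T4,D1,D2,D3,D4,E1,H1,F1,E2,H2,F2,C,Cp,Cm}"
  by (auto intro: gb.exhaust)

instance gb :: finite
  by standard (simp add: gb_UNIV)

definition gb_odd :: "gb \<Rightarrow> bool" where
  "gb_odd x \<longleftrightarrow> x \<in> {T1,T2,T3,T4,D1,D2,D3,D4}"

text \<open>Elements of Gamma: coefficient vectors w.r.t. the basis.\<close>
type_synonym gamma = "gb \<Rightarrow> complex"

definition lc :: "(gb \<times> complex) list \<Rightarrow> gamma" where
  "lc xs = (\<lambda>z. sum_list (map snd (filter (\<lambda>p. fst p = z) xs)))"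

text \<open>The list of nonzero brackets given in the paper.\<close>
definition gtable :: "(gb \<times> gb \<times> (gb \<times> complex) list) list" where
  "gtable = [
    (T1,T3,[(E1,1)]), (T2,T4,[(E1,1)]),
    (D1,D3,[(F1,1)]), (D2,D4,[(F1,1)]),
    (E1,D1,[(T3,-2)]), (E1,D3,[(T1,-2)]), (E1,D2,[(T4,-2)]), (E1,D4,[(T2,-2)]),
    (F1,T1,[(D3,2)]), (F1,T3,[(D1,2)]), (F1,T2,[(D4,2)]), (F1,T4,[(D2,2)]),
    (E2,T1,[(T4,-1)]), (E2,T2,[(T3,1)]), (E2,D4,[(D1,1)]), (E2,D3,[(D2,-1)]),
    (F2,T4,[(T1,1)]), (F2,T3,[(T2,-1)]), (F2,D1,[(D4,-1)]), (F2,D2,[(D3,1)]),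
    (E1,F1,[(H1,-4)]), (E2,F2,[(H2,-1)]),
    (H1,E1,[(E1,2)]), (H1,F1,[(F1,-2)]), (H2,E2,[(E2,2)]), (H2,F2,[(F2,-2)]),
    (H1,T1,[(T1,1)]), (H1,T2,[(T2,1)]), (H1,T3,[(T3,1)]), (H1,T4,[(T4,1)]),
    (H1,D1,[(D1,-1)]), (H1,D2,[(D2,-1)]), (H1,D3,[(D3,-1)]), (H1,D4,[(D4,-1)]),
    (H2,T1,[(T1,-1)]), (H2,T2,[(T2,-1)]), (H2,T3,[(T3,1)]), (H2,T4,[(T4,1)]),
    (H2,D1,[(D1,1)]), (H2,D2,[(D2,1)]), (H2,D3,[(D3,-1)]), (H2,D4,[(D4,-1)]),
    (T1,D4,[(F2,-2)]), (T2,D3,[(F2,2)]), (D1,T4,[(E2,2)]), (D2,T3,[(E2,-2)]),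
    (T3,D4,[(Cp,1)]), (T4,D3,[(Cm,1)]), (T1,D2,[(Cm,-1)]), (T2,D1,[(Cp,-1)]),
    (T1,D1,[(H1,1),(H2,1),(C,-1/2)]), (T2,D2,[(H1,1),(H2,1),(C,1/2)]),
    (T3,D3,[(H1,1),(H2,-1),(C,1/2)]), (T4,D4,[(H1,1),(H2,-1),(C,-1/2)])
  ]"

definition tlookup :: "gb \<Rightarrow> gb \<Rightarrow> (gb \<times> complex) list option" where
  "tlookup x y = map_option (snd \<circ> snd) (find (\<lambda>e. fst e = x \<and> fst (snd e) = y) gtable)"

text \<open>Bracket of basis elements: table entries, their super-antisymmetric
  counterparts [Y,X] = -(-1)^(p(X)p(Y)) [X,Y], and zero otherwise.\<close>
definition gbr_basis :: "gb \<Rightarrow> gb \<Rightarrow> gamma" where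
  "gbr_basis x y =
     (case tlookup x y of
        Some r \<Rightarrow> lc r
      | None \<Rightarrow> (case tlookup y x of
                  Some r \<Rightarrow> (\<lambda>z. (if gb_odd x \<and> gb_odd y then 1 else -1) * lc r z)
                | None \<Rightarrow> (\<lambda>z. 0)))"

definition gbr :: "gamma \<Rightarrow> gamma \<Rightarrow> gamma" where
  "gbr u v = (\<lambda>z. \<Sum>x\<in>UNIV. \<Sum>y\<in>UNIV. u x * v y * gbr_basis x y z)"

definition gamma_even :: "gamma \<Rightarrow> bool" where
  "gamma_even u \<longleftrightarrow> (\<forall>x. gb_odd x \<longrightarrow> u x = 0)"

definition gamma_odd :: "gamma \<Rightarrow> bool" where
  "gamma_odd u \<longleftrightarrow> (\<forall>x. \<not> gb_odd x \<longrightarrow> u x = 0)"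

text \<open>A symbol A = sum_i a_i(t) tau^i is represented by its coefficient function:
  A i j is the coefficient of t^j tau^i.\<close>
type_synonym psd = "int \<Rightarrow> int \<Rightarrow> complex"

definition psd_wf :: "psd \<Rightarrow> bool" where
  "psd_wf A \<longleftrightarrow> (\<exists>N. \<forall>i>N. \<forall>j. A i j = 0) \<and> (\<forall>i. finite {j. A i j \<noteq> 0})"

definition psd_zero :: psd where "psd_zero = (\<lambda>i j. 0)"
definition psd_add :: "psd \<Rightarrow> psd \<Rightarrow> psd" where "psd_add A B = (\<lambda>i j. A i j + B i j)"
definition psd_smult :: "complex \<Rightarrow> psd \<Rightarrow> psd" where "psd_smult c A = (\<lambda>i j. c * A i j)"

definition psd_mono :: "complex \<Rightarrow> int \<Rightarrow> int \<Rightarrow> psd" where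
  "psd_mono c i j = (\<lambda>i' j'. if i' = i \<and> j' = j then c else 0)"

text \<open>Falling factorial x(x-1)...(x-n+1): d^n/dx^n x^k = ff k n x^(k-n).\<close>
definition ff :: "int \<Rightarrow> nat \<Rightarrow> complex" where
  "ff k n = (\<Prod>m<n. of_int k - of_nat m)"

text \<open>A o B = sum_n 1/n! d_tau^n A d_t^n B.  The coefficient of t^j tau^i receives
  contributions from n, a term a t^j1 tau^i1 of A and a term t^j2 tau^i2 of B with
  i = i1 - n + i2, j = j1 + j2 - n.  For well-formed symbols only finitely many
  terms are nonzero.\<close>
definition psd_term :: "psd \<Rightarrow> psd \<Rightarrow> int \<Rightarrow> int \<Rightarrow> nat \<times> int \<times> int \<Rightarrow> complex" where
  "psd_term A B i j = (\<lambda>(n, i1, j1).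
      let i2 = i + int n - i1; j2 = j + int n - j1 in
      A i1 j1 * B i2 j2 * ff i1 n * ff j2 n / of_nat (fact n))"

definition psd_mult :: "psd \<Rightarrow> psd \<Rightarrow> psd" where
  "psd_mult A B = (\<lambda>i j. \<Sum>x\<in>{x. psd_term A B i j x \<noteq> 0}. psd_term A B i j x)"

text \<open>Rows/columns are indexed 1..4; 1,2 even and 3,4 odd.\<close>
type_synonym mat = "nat \<Rightarrow> nat \<Rightarrow> psd"

definition idx_odd :: "nat \<Rightarrow> bool" where "idx_odd k \<longleftrightarrow> k \<in> {3,4}"

definition munit :: "psd \<Rightarrow> nat \<Rightarrow> nat \<Rightarrow> mat" where
  "munit w k l = (\<lambda>k' l'. if k' = k \<and> l' = l then w else psd_zero)"

definition madd :: "mat \<Rightarrow> mat \<Rightarrow> mat" where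
  "madd X Y = (\<lambda>k l. psd_add (X k l) (Y k l))"

definition msub :: "mat \<Rightarrow> mat \<Rightarrow> mat" where
  "msub X Y = (\<lambda>k l. psd_add (X k l) (psd_smult (-1) (Y k l)))"

definition msmult :: "complex \<Rightarrow> mat \<Rightarrow> mat" where
  "msmult c X = (\<lambda>k l. psd_smult c (X k l))"

definition mscal :: "psd \<Rightarrow> mat" where
  "mscal w = (\<lambda>k l. if k = l \<and> k \<in> {1..4} then w else psd_zero)"

definition mmult :: "mat \<Rightarrow> mat \<Rightarrow> mat" where
  "mmult X Y = (\<lambda>k l. foldr psd_add (map (\<lambda>m. psd_mult (X k m) (Y m l)) [1,2,3,4]) psd_zero)"

definition meven_part :: "mat \<Rightarrow> mat" where
  "meven_part X = (\<lambda>k l. if idx_odd k = idx_odd l then X k l else psd_zero)"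

definition modd_part :: "mat \<Rightarrow> mat" where
  "modd_part X = (\<lambda>k l. if idx_odd k \<noteq> idx_odd l then X k l else psd_zero)"

definition mat_even :: "mat \<Rightarrow> bool" where "mat_even X \<longleftrightarrow> modd_part X = (\<lambda>k l. psd_zero)"
definition mat_odd :: "mat \<Rightarrow> bool" where "mat_odd X \<longleftrightarrow> meven_part X = (\<lambda>k l. psd_zero)"

definition comm :: "mat \<Rightarrow> mat \<Rightarrow> mat" where "comm X Y = msub (mmult X Y) (mmult Y X)"
definition acomm :: "mat \<Rightarrow> mat \<Rightarrow> mat" where "acomm X Y = madd (mmult X Y) (mmult Y X)"

text \<open>Super bracket [X,Y] = XY - (-1)^(p(X)p(Y)) YX on homogeneous matrices,
  extended bilinearly.\<close>
definition mbr :: "mat \<Rightarrow> mat \<Rightarrow> mat" where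
  "mbr X Y = madd (madd (comm (meven_part X) (meven_part Y)) (comm (meven_part X) (modd_part Y)))
                  (madd (comm (modd_part X) (meven_part Y)) (acomm (modd_part X) (modd_part Y)))"

definition tt :: psd where "tt = psd_mono 1 1 1"
definition psd_c :: "complex \<Rightarrow> psd" where "psd_c c = psd_mono c 0 0"
definition uu :: psd where "uu = psd_mult (psd_mono 1 (-1) 0) (psd_mono 1 0 (-1))"

definition tmat :: "complex \<Rightarrow> complex \<Rightarrow> gb \<Rightarrow> mat" where
  "tmat a b x = (case x of
      Cp \<Rightarrow> mscal tt
    | C \<Rightarrow> mscal (psd_c 1)
    | Cm \<Rightarrow> mscal uu
    | E1 \<Rightarrow> munit (psd_c 1) 1 2
    | F1 \<Rightarrow> munit (psd_c 1) 2 1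
    | H1 \<Rightarrow> msub (munit (psd_c 1) 1 1) (munit (psd_c 1) 2 2)
    | E2 \<Rightarrow> munit (psd_c 1) 4 3
    | F2 \<Rightarrow> munit (psd_c 1) 3 4
    | H2 \<Rightarrow> msub (munit (psd_c 1) 3 3) (munit (psd_c 1) 4 4)
    | T3 \<Rightarrow> madd (munit tt 1 3) (munit (psd_c a) 4 2)
    | T2 \<Rightarrow> madd (munit (psd_smult (-1) tt) 1 4) (munit (psd_c a) 3 2)
    | D4 \<Rightarrow> madd (munit tt 2 4) (munit (psd_c a) 3 1)
    | D1 \<Rightarrow> madd (munit (psd_smult (-1) tt) 2 3) (munit (psd_c a) 4 1)
    | T1 \<Rightarrow> madd (munit (psd_c b) 1 4) (munit uu 3 2)
    | T4 \<Rightarrow> madd (munit (psd_c b) 1 3) (munit (psd_smult (-1) uu) 4 2)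
    | D2 \<Rightarrow> madd (munit (psd_c b) 2 3) (munit uu 4 1)
    | D3 \<Rightarrow> madd (munit (psd_c b) 2 4) (munit (psd_smult (-1) uu) 3 1))"

definition mspan :: "complex \<Rightarrow> complex \<Rightarrow> mat set" where
  "mspan a b = {X. \<exists>c :: gb \<Rightarrow> complex. X = (\<lambda>k l i j. \<Sum>x\<in>UNIV. c x * tmat a b x k l i j)}"

end

theory Submission
  imports Defs
begin


definition inD :: "psd \<Rightarrow> bool" where
  "inD A \<longleftrightarrow> (\<forall>i j. A i j \<noteq> 0 \<longrightarrow> i = j \<and> i \<le> 1)"

definition SS :: "int \<Rightarrow> (nat \<times> int \<times> int) set" where
  "SS i = {0..nat (2 - i)} \<times> {i - 1..1} \<times> {i - 1..1}"

lemma finite_SS: "finite (SS i)" by (simp add: SS_def)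

lemma sum_nz_superset:
  assumes "finite S" "{x. f x \<noteq> 0} \<subseteq> S"
  shows "sum f {x. f x \<noteq> 0} = sum f S"
  using assms by (intro sum.mono_neutral_left) (auto intro: finite_subset)

lemma psd_term_eq: "psd_term A B i j (n, i1, j1) =
   A i1 j1 * B (i + int n - i1) (j + int n - j1) * (ff i1 n * ff (j + int n - j1) n / of_nat (fact n))"
  by (simp add: psd_term_def Let_def)

lemma mult_D:
  assumes "inD A" "inD B"
  shows "psd_mult A B i j = (\<Sum>x\<in>SS i. psd_term A B i j x)"
  unfolding psd_mult_def
proof (rule sum_nz_superset[OF finite_SS], safe)
  fix n i1 j1 assume nz: "psd_term A B i j (n, i1, j1) \<noteq> 0"
  then have a: "A i1 j1 \<noteq> 0" and b: "B (i + int n - i1) (j + int n - j1) \<noteq> 0"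
    by (auto simp: psd_term_eq)
  from a assms(1) have "i1 = j1" "i1 \<le> 1" by (auto simp: inD_def)
  moreover from b assms(2) have "i + int n - i1 \<le> 1" by (auto simp: inD_def)
  ultimately show "(n, i1, j1) \<in> SS i" by (auto simp: SS_def)
qed

lemma inD_sum:
  assumes "\<And>x. x \<in> I \<Longrightarrow> inD (A x)"
  shows "inD (\<lambda>i j. \<Sum>x\<in>I. c x * A x i j)"
  using assms unfolding inD_def
  by (smt (verit, ccfv_threshold) mult_eq_0_iff sum.neutral)

lemma prod_sum_aux: "(\<Sum>x\<in>I. c x * a x) * (\<Sum>y\<in>J. d y * b y) * (K::complex) = (\<Sum>x\<in>I. \<Sum>y\<in>J. c x * d y * (a x * b y * K))"
  by (simp add: sum_distrib_left sum_distrib_right mult_ac sum.swap[of _ J])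

lemma bilin:
  assumes "finite I" "finite J" "\<And>x. x \<in> I \<Longrightarrow> inD (A x)" "\<And>y. y \<in> J \<Longrightarrow> inD (B y)"
  shows "psd_mult (\<lambda>i j. \<Sum>x\<in>I. c x * A x i j) (\<lambda>i j. \<Sum>y\<in>J. d y * B y i j) i j
     = (\<Sum>x\<in>I. \<Sum>y\<in>J. c x * d y * psd_mult (A x) (B y) i j)"
proof -
  have "psd_mult (\<lambda>i j. \<Sum>x\<in>I. c x * A x i j) (\<lambda>i j. \<Sum>y\<in>J. d y * B y i j) i j
     = (\<Sum>t\<in>SS i. psd_term (\<lambda>i j. \<Sum>x\<in>I. c x * A x i j) (\<lambda>i j. \<Sum>y\<in>J. d y * B y i j) i j t)"
    by (rule mult_D) (use assms in \<open>auto intro!: inD_sum\<close>)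
  also have "\<dots> = (\<Sum>t\<in>SS i. \<Sum>x\<in>I. \<Sum>y\<in>J. c x * d y * psd_term (A x) (B y) i j t)"
    by (rule sum.cong[OF refl]) (auto simp only: psd_term_eq prod_sum_aux)
  also have "\<dots> = (\<Sum>x\<in>I. \<Sum>y\<in>J. c x * d y * (\<Sum>t\<in>SS i. psd_term (A x) (B y) i j t))"
    by (simp add: sum.swap[of _ "SS i"] sum_distrib_left)
  also have "\<dots> = (\<Sum>x\<in>I. \<Sum>y\<in>J. c x * d y * psd_mult (A x) (B y) i j)"
    using assms by (simp add: mult_D)
  finally show ?thesis .
qed


definition one :: psd where "one = psd_c 1"

lemma sum_two: "{x. f x \<noteq> 0} \<subseteq> {p, q} \<Longrightarrow> p \<noteq> q \<Longrightarrow> sum f {x. f x \<noteq> 0} = f p + f q"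
  by (subst sum_nz_superset[of "{p,q}"]) auto

lemma sum_one: "{x. f x \<noteq> 0} \<subseteq> {p} \<Longrightarrow> sum f {x. f x \<noteq> 0} = f p"
  by (subst sum_nz_superset[of "{p}"]) auto

lemma ff_0: "ff k 0 = 1" by (simp add: ff_def)
lemma ff_1: "ff k (Suc 0) = of_int k" by (simp add: ff_def)
lemma ff_Suc: "ff k (Suc n) = ff k n * (of_int k - of_nat n)" by (simp add: ff_def)
lemma ff_zero: "n \<ge> 1 \<Longrightarrow> ff 0 n = 0"
  by (auto simp: ff_def prod_zero_iff intro: bexI[of _ 0])
lemma ff_one: "n \<ge> 2 \<Longrightarrow> ff 1 n = 0"
  by (auto simp: ff_def prod_zero_iff intro: bexI[of _ 1])
lemma ff_m1: "ff (-1) n = (-1)^n * fact n"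
  by (induction n) (auto simp: ff_0 ff_Suc algebra_simps)

lemma one_val: "one i j = (if i = 0 \<and> j = 0 then 1 else 0)"
  by (simp add: one_def psd_c_def psd_mono_def)
lemma tt_val: "tt i j = (if i = 1 \<and> j = 1 then 1 else 0)"
  by (simp add: tt_def psd_mono_def)

lemma one_mult: "psd_mult one X = X"
proof (intro ext)
  fix i j
  have "{x. psd_term one X i j x \<noteq> 0} \<subseteq> {(0,0,0)}"
  proof -
    { fix n i1 j1 assume "psd_term one X i j (n, i1, j1) \<noteq> 0"
      then have "i1 = 0" "j1 = 0" "ff i1 n \<noteq> 0" by (auto simp: psd_term_eq one_val split: if_splits)
      then have "n = 0 \<and> i1 = 0 \<and> j1 = 0" using ff_zero[of n] by (cases n) auto }
    then show ?thesis by auto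
  qed
  then show "psd_mult one X i j = X i j"
    unfolding psd_mult_def by (subst sum_one) (auto simp: psd_term_eq one_val ff_0)
qed

lemma mult_one: "psd_mult X one = X"
proof (intro ext)
  fix i j
  have "{x. psd_term X one i j x \<noteq> 0} \<subseteq> {(0,i,j)}"
  proof -
    { fix n i1 j1 assume "psd_term X one i j (n, i1, j1) \<noteq> 0"
      then have h: "i + int n - i1 = 0" "j + int n - j1 = 0" "ff (j + int n - j1) n \<noteq> 0"
        by (auto simp: psd_term_eq one_val split: if_splits)
      then have "n = 0" using ff_zero[of n] by (cases n) auto
      then have "n = 0 \<and> i1 = i \<and> j1 = j" using h by auto }
    then show ?thesis by auto
  qed
  then show "psd_mult X one i j = X i j"
    unfolding psd_mult_def by (subst sum_one) (auto simp: psd_term_eq one_val ff_0)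
qed

lemma uu_val: "uu i j = (if i = j \<and> i \<le> -1 then fact (nat (-1 - i)) else 0)"
proof -
  have "{x. psd_term (psd_mono 1 (-1) 0) (psd_mono 1 0 (-1)) i j x \<noteq> 0} \<subseteq> {(nat (-1 - i), -1, 0)}"
    by (auto simp: psd_term_eq psd_mono_def split: if_splits)
  then have "uu i j = psd_term (psd_mono 1 (-1) 0) (psd_mono 1 0 (-1)) i j (nat (-1 - i), -1, 0)"
    unfolding uu_def psd_mult_def by (rule sum_one)
  also have "\<dots> = (if i = j \<and> i \<le> -1 then fact (nat (-1 - i)) else 0)"
  proof (cases "i = j \<and> i \<le> -1")
    case True
    then have "ff (-1) (nat (-1 - i)) * ff (-1) (nat (-1 - i)) / fact (nat (-1 - i)) = (fact (nat (-1 - i)) :: complex)"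
      by (simp add: ff_m1 power_mult_distrib[symmetric] flip: power_add)
    then show ?thesis using True by (simp add: psd_term_eq psd_mono_def)
  next
    case False
    then show ?thesis by (auto simp: psd_term_eq psd_mono_def)
  qed
  finally show ?thesis .
qed

lemma fact_aux: "i \<le> -1 \<Longrightarrow> (fact (nat (- i)) :: complex) = - of_int i * fact (nat (-1 - i))"
proof -
  assume "i \<le> -1"
  then have "nat (-i) = Suc (nat (-1 - i))" by simp
  then show ?thesis using \<open>i \<le> -1\<close> by (simp add: of_nat_nat)
qed

lemma tt_uu: "psd_mult tt uu = one"
proof (intro ext)
  fix i j
  have "{x. psd_term tt uu i j x \<noteq> 0} \<subseteq> {(0,1,1), (1,1,1)}"
  proof -
    { fix n i1 j1 assume "psd_term tt uu i j (n, i1, j1) \<noteq> 0"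
      then have h: "i1 = 1" "j1 = 1" "ff 1 n \<noteq> 0"
        by (auto simp: psd_term_eq tt_val split: if_splits)
      then have "n \<le> 1" using ff_one[of n] by linarith
      then have "(n, i1, j1) \<in> {(0,1,1), (1,1,1)}" using h by auto }
    then show ?thesis by auto
  qed
  then show "psd_mult tt uu i j = one i j"
    unfolding psd_mult_def
    by (subst sum_two) (auto simp: psd_term_eq tt_val uu_val one_val ff_0 ff_1 fact_aux)
qed

lemma uu_tt: "psd_mult uu tt = one"
proof (intro ext)
  fix i j
  have "{x. psd_term uu tt i j x \<noteq> 0} \<subseteq> {(0,i-1,j-1), (1,i,j)}"
  proof -
    { fix n i1 j1 assume "psd_term uu tt i j (n, i1, j1) \<noteq> 0"
      then have h: "i + int n - i1 = 1" "j + int n - j1 = 1" "ff 1 n \<noteq> 0"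
        by (auto simp: psd_term_eq tt_val split: if_splits)
      then have "n \<le> 1" using ff_one[of n] by linarith
      then have "(n, i1, j1) \<in> {(0,i-1,j-1), (1,i,j)}" using h by auto }
    then show ?thesis by auto
  qed
  then show "psd_mult uu tt i j = one i j"
    unfolding psd_mult_def
    by (subst sum_two) (auto simp: psd_term_eq tt_val uu_val one_val ff_0 ff_1 fact_aux)
qed


datatype ent = Ent complex complex complex complex complex

definition TT :: psd where "TT = psd_mult tt tt"
definition UU :: psd where "UU = psd_mult uu uu"

fun ev :: "ent \<Rightarrow> psd" where
  "ev (Ent c0 c1 c2 c3 c4) = (\<lambda>i j. c0 * one i j + c1 * tt i j + c2 * uu i j + c3 * TT i j + c4 * UU i j)"

fun trunc :: "ent \<Rightarrow> ent" where "trunc (Ent c0 c1 c2 c3 c4) = Ent c0 c1 c2 0 0"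
fun emul :: "ent \<Rightarrow> ent \<Rightarrow> ent" where
  "emul (Ent p0 p1 p2 p3 p4) (Ent q0 q1 q2 q3 q4) =
     Ent (p0*q0 + p1*q2 + p2*q1) (p0*q1 + p1*q0) (p0*q2 + p2*q0) (p1*q1) (p2*q2)"
fun eadd :: "ent \<Rightarrow> ent \<Rightarrow> ent" where
  "eadd (Ent p0 p1 p2 p3 p4) (Ent q0 q1 q2 q3 q4) = Ent (p0+q0) (p1+q1) (p2+q2) (p3+q3) (p4+q4)"
fun esc :: "complex \<Rightarrow> ent \<Rightarrow> ent" where
  "esc c (Ent p0 p1 p2 p3 p4) = Ent (c*p0) (c*p1) (c*p2) (c*p3) (c*p4)"
definition ezero :: ent where "ezero = Ent 0 0 0 0 0"

lemma inD_one: "inD one" by (simp add: inD_def one_val)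
lemma inD_tt: "inD tt" by (simp add: inD_def tt_val)
lemma inD_uu: "inD uu" by (simp add: inD_def uu_val)

definition bas :: "nat \<Rightarrow> psd" where "bas x = (if x = 0 then one else if x = 1 then tt else uu)"
fun cf :: "ent \<Rightarrow> nat \<Rightarrow> complex" where
  "cf (Ent c0 c1 c2 c3 c4) x = (if x = 0 then c0 else if x = 1 then c1 else c2)"

lemma ev_trunc_sum: "ev (trunc p) = (\<lambda>i j. \<Sum>x\<in>{0,1,2}. cf p x * bas x i j)"
  by (cases p) (simp add: bas_def add.assoc)

lemma inD_bas: "inD (bas x)" by (simp add: bas_def inD_one inD_tt inD_uu)

lemma inD_ev_trunc: "inD (ev (trunc p))"
  unfolding ev_trunc_sum by (rule inD_sum) (rule inD_bas)

lemma emul_ok: "psd_mult (ev (trunc p)) (ev (trunc q)) = ev (emul p q)"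
proof (intro ext)
  fix i j
  show "psd_mult (ev (trunc p)) (ev (trunc q)) i j = ev (emul p q) i j"
    unfolding ev_trunc_sum
    apply (subst bilin)
        apply (simp_all add: inD_bas)
    apply (cases p; cases q)
    apply (simp add: bas_def one_mult mult_one tt_uu uu_tt TT_def[symmetric] UU_def[symmetric] algebra_simps)
    done
qed

lemma ev_eadd: "ev (eadd p q) = psd_add (ev p) (ev q)"
  by (cases p; cases q) (auto simp: psd_add_def algebra_simps)
lemma ev_esc: "ev (esc c p) = psd_smult c (ev p)"
  by (cases p) (auto simp: psd_smult_def algebra_simps)
lemma ev_ezero: "ev ezero = psd_zero"
  by (auto simp: ezero_def psd_zero_def)

lemma zero_mult: "psd_mult psd_zero X = psd_zero"
  by (simp add: psd_mult_def psd_term_def psd_zero_def)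
lemma mult_zero: "psd_mult X psd_zero = psd_zero"
  by (simp add: psd_mult_def psd_term_def psd_zero_def)


datatype sm = SM ent ent ent ent ent ent ent ent ent ent ent ent ent ent ent ent

fun sget :: "sm \<Rightarrow> nat \<Rightarrow> nat \<Rightarrow> ent" where
  "sget (SM p11 p12 p13 p14 p21 p22 p23 p24 p31 p32 p33 p34 p41 p42 p43 p44) k l = (if k = 1 then (if l = 1 then p11 else if l = 2 then p12 else if l = 3 then p13 else p14) else if k = 2 then (if l = 1 then p21 else if l = 2 then p22 else if l = 3 then p23 else p24) else if k = 3 then (if l = 1 then p31 else if l = 2 then p32 else if l = 3 then p33 else p34) else (if l = 1 then p41 else if l = 2 then p42 else if l = 3 then p43 else p44))"

definition mk :: "(nat \<Rightarrow> nat \<Rightarrow> ent) \<Rightarrow> sm" where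
  "mk f = SM (f 1 1) (f 1 2) (f 1 3) (f 1 4) (f 2 1) (f 2 2) (f 2 3) (f 2 4) (f 3 1) (f 3 2) (f 3 3) (f 3 4) (f 4 1) (f 4 2) (f 4 3) (f 4 4)"

definition szero :: sm where "szero = mk (\<lambda>i j. ezero)"

definition inr :: "nat \<Rightarrow> nat \<Rightarrow> bool" where "inr k l \<longleftrightarrow> 1 \<le> k \<and> k \<le> 4 \<and> 1 \<le> l \<and> l \<le> 4"

lemma inr_cases: "inr k l \<Longrightarrow> (k = 1 \<or> k = 2 \<or> k = 3 \<or> k = 4) \<and> (l = 1 \<or> l = 2 \<or> l = 3 \<or> l = 4)"
  by (auto simp: inr_def)

lemma sget_mk: "inr k l \<Longrightarrow> sget (mk f) k l = f k l"
  by (drule inr_cases) (auto simp: mk_def)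

definition sment :: "sm \<Rightarrow> sm \<Rightarrow> nat \<Rightarrow> nat \<Rightarrow> ent" where
  "sment P Q i j = eadd (emul (sget P i 1) (sget Q 1 j)) (eadd (emul (sget P i 2) (sget Q 2 j))
       (eadd (emul (sget P i 3) (sget Q 3 j)) (eadd (emul (sget P i 4) (sget Q 4 j)) ezero)))"
definition smm :: "sm \<Rightarrow> sm \<Rightarrow> sm" where "smm P Q = mk (sment P Q)"
definition seven :: "sm \<Rightarrow> sm" where
  "seven P = mk (\<lambda>i j. if idx_odd i = idx_odd j then sget P i j else ezero)"
definition sodd :: "sm \<Rightarrow> sm" where
  "sodd P = mk (\<lambda>i j. if idx_odd i \<noteq> idx_odd j then sget P i j else ezero)"
definition sadd :: "sm \<Rightarrow> sm \<Rightarrow> sm" where "sadd P Q = mk (\<lambda>i j. eadd (sget P i j) (sget Q i j))"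
definition ssub :: "sm \<Rightarrow> sm \<Rightarrow> sm" where "ssub P Q = mk (\<lambda>i j. eadd (sget P i j) (esc (-1) (sget Q i j)))"
definition ssct :: "complex \<Rightarrow> sm \<Rightarrow> sm" where "ssct c P = mk (\<lambda>i j. esc c (trunc (sget P i j)))"

definition evm3 :: "sm \<Rightarrow> mat" where
  "evm3 M = (\<lambda>k l. if inr k l then ev (trunc (sget M k l)) else psd_zero)"
definition evm5 :: "sm \<Rightarrow> mat" where
  "evm5 M = (\<lambda>k l. if inr k l then ev (sget M k l) else psd_zero)"

definition smbr :: "sm \<Rightarrow> sm \<Rightarrow> sm" where
  "smbr P Q = sadd (sadd (ssub (smm (seven P) (seven Q)) (smm (seven Q) (seven P)))
                         (ssub (smm (seven P) (sodd Q)) (smm (sodd Q) (seven P))))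
                   (sadd (ssub (smm (sodd P) (seven Q)) (smm (seven Q) (sodd P)))
                         (sadd (smm (sodd P) (sodd Q)) (smm (sodd Q) (sodd P))))"

lemma psd_add_zero: "psd_add psd_zero psd_zero = psd_zero"
  by (simp add: psd_add_def psd_zero_def)
lemma psd_smult_zero: "psd_smult c psd_zero = psd_zero"
  by (simp add: psd_smult_def psd_zero_def)
lemma trunc_ezero: "trunc ezero = ezero" by (simp add: ezero_def)

lemma inr_row: "inr k l \<Longrightarrow> inr k 1 \<and> inr k 2 \<and> inr k 3 \<and> inr k 4 \<and> inr 1 l \<and> inr 2 l \<and> inr 3 l \<and> inr 4 l"
  by (auto simp: inr_def)

lemma mmult_evm: "mmult (evm3 P) (evm3 Q) = evm5 (smm P Q)"
proof (rule ext, rule ext)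
  fix k l
  show "mmult (evm3 P) (evm3 Q) k l = evm5 (smm P Q) k l"
  proof (cases "inr k l")
    case True
    then show ?thesis
      using inr_row[OF True]
      by (simp add: mmult_def evm3_def evm5_def smm_def sget_mk sment_def emul_ok ev_eadd ev_ezero)
  next
    case False
    then show ?thesis
      by (auto simp: mmult_def evm3_def evm5_def zero_mult mult_zero psd_add_zero inr_def)
  qed
qed

lemma even_evm: "meven_part (evm3 P) = evm3 (seven P)"
  by (auto simp: meven_part_def evm3_def seven_def sget_mk trunc_ezero ev_ezero intro!: ext)

lemma odd_evm: "modd_part (evm3 P) = evm3 (sodd P)"
  by (auto simp: modd_part_def evm3_def sodd_def sget_mk trunc_ezero ev_ezero intro!: ext)

lemma madd_evm: "madd (evm5 P) (evm5 Q) = evm5 (sadd P Q)"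
  by (auto simp: madd_def evm5_def sadd_def sget_mk ev_eadd psd_add_zero intro!: ext)

lemma msub_evm: "msub (evm5 P) (evm5 Q) = evm5 (ssub P Q)"
  by (auto simp: msub_def evm5_def ssub_def sget_mk ev_eadd ev_esc psd_add_zero psd_smult_zero intro!: ext)

lemma mbr_evm: "mbr (evm3 P) (evm3 Q) = evm5 (smbr P Q)"
  by (simp add: mbr_def comm_def acomm_def even_evm odd_evm mmult_evm madd_evm msub_evm smbr_def)


fun TL :: "complex \<Rightarrow> complex \<Rightarrow> gb \<Rightarrow> sm" where
  "TL a b T1 = (SM (Ent 0 0 0 0 0) (Ent 0 0 0 0 0) (Ent 0 0 0 0 0) (Ent (b) 0 0 0 0) (Ent 0 0 0 0 0) (Ent 0 0 0 0 0) (Ent 0 0 0 0 0) (Ent 0 0 0 0 0) (Ent 0 0 0 0 0) (Ent 0 0 (1) 0 0) (Ent 0 0 0 0 0) (Ent 0 0 0 0 0) (Ent 0 0 0 0 0) (Ent 0 0 0 0 0) (Ent 0 0 0 0 0) (Ent 0 0 0 0 0))"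
|   "TL a b T2 = (SM (Ent 0 0 0 0 0) (Ent 0 0 0 0 0) (Ent 0 0 0 0 0) (Ent 0 (-1) 0 0 0) (Ent 0 0 0 0 0) (Ent 0 0 0 0 0) (Ent 0 0 0 0 0) (Ent 0 0 0 0 0) (Ent 0 0 0 0 0) (Ent (a) 0 0 0 0) (Ent 0 0 0 0 0) (Ent 0 0 0 0 0) (Ent 0 0 0 0 0) (Ent 0 0 0 0 0) (Ent 0 0 0 0 0) (Ent 0 0 0 0 0))"
|   "TL a b T3 = (SM (Ent 0 0 0 0 0) (Ent 0 0 0 0 0) (Ent 0 (1) 0 0 0) (Ent 0 0 0 0 0) (Ent 0 0 0 0 0) (Ent 0 0 0 0 0) (Ent 0 0 0 0 0) (Ent 0 0 0 0 0) (Ent 0 0 0 0 0) (Ent 0 0 0 0 0) (Ent 0 0 0 0 0) (Ent 0 0 0 0 0) (Ent 0 0 0 0 0) (Ent (a) 0 0 0 0) (Ent 0 0 0 0 0) (Ent 0 0 0 0 0))"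
|   "TL a b T4 = (SM (Ent 0 0 0 0 0) (Ent 0 0 0 0 0) (Ent (b) 0 0 0 0) (Ent 0 0 0 0 0) (Ent 0 0 0 0 0) (Ent 0 0 0 0 0) (Ent 0 0 0 0 0) (Ent 0 0 0 0 0) (Ent 0 0 0 0 0) (Ent 0 0 0 0 0) (Ent 0 0 0 0 0) (Ent 0 0 0 0 0) (Ent 0 0 0 0 0) (Ent 0 0 (-1) 0 0) (Ent 0 0 0 0 0) (Ent 0 0 0 0 0))"
|   "TL a b D1 = (SM (Ent 0 0 0 0 0) (Ent 0 0 0 0 0) (Ent 0 0 0 0 0) (Ent 0 0 0 0 0) (Ent 0 0 0 0 0) (Ent 0 0 0 0 0) (Ent 0 (-1) 0 0 0) (Ent 0 0 0 0 0) (Ent 0 0 0 0 0) (Ent 0 0 0 0 0) (Ent 0 0 0 0 0) (Ent 0 0 0 0 0) (Ent (a) 0 0 0 0) (Ent 0 0 0 0 0) (Ent 0 0 0 0 0) (Ent 0 0 0 0 0))"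
|   "TL a b D2 = (SM (Ent 0 0 0 0 0) (Ent 0 0 0 0 0) (Ent 0 0 0 0 0) (Ent 0 0 0 0 0) (Ent 0 0 0 0 0) (Ent 0 0 0 0 0) (Ent (b) 0 0 0 0) (Ent 0 0 0 0 0) (Ent 0 0 0 0 0) (Ent 0 0 0 0 0) (Ent 0 0 0 0 0) (Ent 0 0 0 0 0) (Ent 0 0 (1) 0 0) (Ent 0 0 0 0 0) (Ent 0 0 0 0 0) (Ent 0 0 0 0 0))"
|   "TL a b D3 = (SM (Ent 0 0 0 0 0) (Ent 0 0 0 0 0) (Ent 0 0 0 0 0) (Ent 0 0 0 0 0) (Ent 0 0 0 0 0) (Ent 0 0 0 0 0) (Ent 0 0 0 0 0) (Ent (b) 0 0 0 0) (Ent 0 0 (-1) 0 0) (Ent 0 0 0 0 0) (Ent 0 0 0 0 0) (Ent 0 0 0 0 0) (Ent 0 0 0 0 0) (Ent 0 0 0 0 0) (Ent 0 0 0 0 0) (Ent 0 0 0 0 0))"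
|   "TL a b D4 = (SM (Ent 0 0 0 0 0) (Ent 0 0 0 0 0) (Ent 0 0 0 0 0) (Ent 0 0 0 0 0) (Ent 0 0 0 0 0) (Ent 0 0 0 0 0) (Ent 0 0 0 0 0) (Ent 0 (1) 0 0 0) (Ent (a) 0 0 0 0) (Ent 0 0 0 0 0) (Ent 0 0 0 0 0) (Ent 0 0 0 0 0) (Ent 0 0 0 0 0) (Ent 0 0 0 0 0) (Ent 0 0 0 0 0) (Ent 0 0 0 0 0))"
|   "TL a b E1 = (SM (Ent 0 0 0 0 0) (Ent (1) 0 0 0 0) (Ent 0 0 0 0 0) (Ent 0 0 0 0 0) (Ent 0 0 0 0 0) (Ent 0 0 0 0 0) (Ent 0 0 0 0 0) (Ent 0 0 0 0 0) (Ent 0 0 0 0 0) (Ent 0 0 0 0 0) (Ent 0 0 0 0 0) (Ent 0 0 0 0 0) (Ent 0 0 0 0 0) (Ent 0 0 0 0 0) (Ent 0 0 0 0 0) (Ent 0 0 0 0 0))"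
|   "TL a b H1 = (SM (Ent (1) 0 0 0 0) (Ent 0 0 0 0 0) (Ent 0 0 0 0 0) (Ent 0 0 0 0 0) (Ent 0 0 0 0 0) (Ent (-1) 0 0 0 0) (Ent 0 0 0 0 0) (Ent 0 0 0 0 0) (Ent 0 0 0 0 0) (Ent 0 0 0 0 0) (Ent 0 0 0 0 0) (Ent 0 0 0 0 0) (Ent 0 0 0 0 0) (Ent 0 0 0 0 0) (Ent 0 0 0 0 0) (Ent 0 0 0 0 0))"
|   "TL a b F1 = (SM (Ent 0 0 0 0 0) (Ent 0 0 0 0 0) (Ent 0 0 0 0 0) (Ent 0 0 0 0 0) (Ent (1) 0 0 0 0) (Ent 0 0 0 0 0) (Ent 0 0 0 0 0) (Ent 0 0 0 0 0) (Ent 0 0 0 0 0) (Ent 0 0 0 0 0) (Ent 0 0 0 0 0) (Ent 0 0 0 0 0) (Ent 0 0 0 0 0) (Ent 0 0 0 0 0) (Ent 0 0 0 0 0) (Ent 0 0 0 0 0))"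
|   "TL a b E2 = (SM (Ent 0 0 0 0 0) (Ent 0 0 0 0 0) (Ent 0 0 0 0 0) (Ent 0 0 0 0 0) (Ent 0 0 0 0 0) (Ent 0 0 0 0 0) (Ent 0 0 0 0 0) (Ent 0 0 0 0 0) (Ent 0 0 0 0 0) (Ent 0 0 0 0 0) (Ent 0 0 0 0 0) (Ent 0 0 0 0 0) (Ent 0 0 0 0 0) (Ent 0 0 0 0 0) (Ent (1) 0 0 0 0) (Ent 0 0 0 0 0))"
|   "TL a b H2 = (SM (Ent 0 0 0 0 0) (Ent 0 0 0 0 0) (Ent 0 0 0 0 0) (Ent 0 0 0 0 0) (Ent 0 0 0 0 0) (Ent 0 0 0 0 0) (Ent 0 0 0 0 0) (Ent 0 0 0 0 0) (Ent 0 0 0 0 0) (Ent 0 0 0 0 0) (Ent (1) 0 0 0 0) (Ent 0 0 0 0 0) (Ent 0 0 0 0 0) (Ent 0 0 0 0 0) (Ent 0 0 0 0 0) (Ent (-1) 0 0 0 0))"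
|   "TL a b F2 = (SM (Ent 0 0 0 0 0) (Ent 0 0 0 0 0) (Ent 0 0 0 0 0) (Ent 0 0 0 0 0) (Ent 0 0 0 0 0) (Ent 0 0 0 0 0) (Ent 0 0 0 0 0) (Ent 0 0 0 0 0) (Ent 0 0 0 0 0) (Ent 0 0 0 0 0) (Ent 0 0 0 0 0) (Ent (1) 0 0 0 0) (Ent 0 0 0 0 0) (Ent 0 0 0 0 0) (Ent 0 0 0 0 0) (Ent 0 0 0 0 0))"
|   "TL a b C = (SM (Ent (1) 0 0 0 0) (Ent 0 0 0 0 0) (Ent 0 0 0 0 0) (Ent 0 0 0 0 0) (Ent 0 0 0 0 0) (Ent (1) 0 0 0 0) (Ent 0 0 0 0 0) (Ent 0 0 0 0 0) (Ent 0 0 0 0 0) (Ent 0 0 0 0 0) (Ent (1) 0 0 0 0) (Ent 0 0 0 0 0) (Ent 0 0 0 0 0) (Ent 0 0 0 0 0) (Ent 0 0 0 0 0) (Ent (1) 0 0 0 0))"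
|   "TL a b Cp = (SM (Ent 0 (1) 0 0 0) (Ent 0 0 0 0 0) (Ent 0 0 0 0 0) (Ent 0 0 0 0 0) (Ent 0 0 0 0 0) (Ent 0 (1) 0 0 0) (Ent 0 0 0 0 0) (Ent 0 0 0 0 0) (Ent 0 0 0 0 0) (Ent 0 0 0 0 0) (Ent 0 (1) 0 0 0) (Ent 0 0 0 0 0) (Ent 0 0 0 0 0) (Ent 0 0 0 0 0) (Ent 0 0 0 0 0) (Ent 0 (1) 0 0 0))"
|   "TL a b Cm = (SM (Ent 0 0 (1) 0 0) (Ent 0 0 0 0 0) (Ent 0 0 0 0 0) (Ent 0 0 0 0 0) (Ent 0 0 0 0 0) (Ent 0 0 (1) 0 0) (Ent 0 0 0 0 0) (Ent 0 0 0 0 0) (Ent 0 0 0 0 0) (Ent 0 0 0 0 0) (Ent 0 0 (1) 0 0) (Ent 0 0 0 0 0) (Ent 0 0 0 0 0) (Ent 0 0 0 0 0) (Ent 0 0 0 0 0) (Ent 0 0 (1) 0 0))"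

fun sc :: "complex \<Rightarrow> complex \<Rightarrow> complex \<Rightarrow> gb \<Rightarrow> complex" where
  "sc a b K T1 = 1"
|   "sc a b K T2 = 1"
|   "sc a b K T3 = 1"
|   "sc a b K T4 = 1"
|   "sc a b K D1 = 2 / K"
|   "sc a b K D2 = - 2 / K"
|   "sc a b K D3 = - 2 / K"
|   "sc a b K D4 = 2 / K"
|   "sc a b K E1 = K"
|   "sc a b K H1 = 1"
|   "sc a b K F1 = - 4 / K"
|   "sc a b K E2 = 1"
|   "sc a b K H2 = - 1"
|   "sc a b K F2 = - 1"
|   "sc a b K C = - 2 * (K - 2) / K"
|   "sc a b K Cp = 2 * a / K"
|   "sc a b K Cm = 2 * b / K"

fun NL :: "complex \<Rightarrow> complex \<Rightarrow> complex \<Rightarrow> gb \<Rightarrow> sm" where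
  "NL a b K T1 = (SM (Ent 0 0 0 0 0) (Ent 0 0 0 0 0) (Ent 0 0 0 0 0) (Ent (b) 0 0 0 0) (Ent 0 0 0 0 0) (Ent 0 0 0 0 0) (Ent 0 0 0 0 0) (Ent 0 0 0 0 0) (Ent 0 0 0 0 0) (Ent 0 0 (1) 0 0) (Ent 0 0 0 0 0) (Ent 0 0 0 0 0) (Ent 0 0 0 0 0) (Ent 0 0 0 0 0) (Ent 0 0 0 0 0) (Ent 0 0 0 0 0))"
|   "NL a b K T2 = (SM (Ent 0 0 0 0 0) (Ent 0 0 0 0 0) (Ent 0 0 0 0 0) (Ent 0 (-1) 0 0 0) (Ent 0 0 0 0 0) (Ent 0 0 0 0 0) (Ent 0 0 0 0 0) (Ent 0 0 0 0 0) (Ent 0 0 0 0 0) (Ent (a) 0 0 0 0) (Ent 0 0 0 0 0) (Ent 0 0 0 0 0) (Ent 0 0 0 0 0) (Ent 0 0 0 0 0) (Ent 0 0 0 0 0) (Ent 0 0 0 0 0))"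
|   "NL a b K T3 = (SM (Ent 0 0 0 0 0) (Ent 0 0 0 0 0) (Ent 0 (1) 0 0 0) (Ent 0 0 0 0 0) (Ent 0 0 0 0 0) (Ent 0 0 0 0 0) (Ent 0 0 0 0 0) (Ent 0 0 0 0 0) (Ent 0 0 0 0 0) (Ent 0 0 0 0 0) (Ent 0 0 0 0 0) (Ent 0 0 0 0 0) (Ent 0 0 0 0 0) (Ent (a) 0 0 0 0) (Ent 0 0 0 0 0) (Ent 0 0 0 0 0))"
|   "NL a b K T4 = (SM (Ent 0 0 0 0 0) (Ent 0 0 0 0 0) (Ent (b) 0 0 0 0) (Ent 0 0 0 0 0) (Ent 0 0 0 0 0) (Ent 0 0 0 0 0) (Ent 0 0 0 0 0) (Ent 0 0 0 0 0) (Ent 0 0 0 0 0) (Ent 0 0 0 0 0) (Ent 0 0 0 0 0) (Ent 0 0 0 0 0) (Ent 0 0 0 0 0) (Ent 0 0 (-1) 0 0) (Ent 0 0 0 0 0) (Ent 0 0 0 0 0))"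
|   "NL a b K D1 = (SM (Ent 0 0 0 0 0) (Ent 0 0 0 0 0) (Ent 0 0 0 0 0) (Ent 0 0 0 0 0) (Ent 0 0 0 0 0) (Ent 0 0 0 0 0) (Ent 0 (- 2 / K) 0 0 0) (Ent 0 0 0 0 0) (Ent 0 0 0 0 0) (Ent 0 0 0 0 0) (Ent 0 0 0 0 0) (Ent 0 0 0 0 0) (Ent ((2 / K) * a) 0 0 0 0) (Ent 0 0 0 0 0) (Ent 0 0 0 0 0) (Ent 0 0 0 0 0))"
|   "NL a b K D2 = (SM (Ent 0 0 0 0 0) (Ent 0 0 0 0 0) (Ent 0 0 0 0 0) (Ent 0 0 0 0 0) (Ent 0 0 0 0 0) (Ent 0 0 0 0 0) (Ent ((- 2 / K) * b) 0 0 0 0) (Ent 0 0 0 0 0) (Ent 0 0 0 0 0) (Ent 0 0 0 0 0) (Ent 0 0 0 0 0) (Ent 0 0 0 0 0) (Ent 0 0 (- 2 / K) 0 0) (Ent 0 0 0 0 0) (Ent 0 0 0 0 0) (Ent 0 0 0 0 0))"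
|   "NL a b K D3 = (SM (Ent 0 0 0 0 0) (Ent 0 0 0 0 0) (Ent 0 0 0 0 0) (Ent 0 0 0 0 0) (Ent 0 0 0 0 0) (Ent 0 0 0 0 0) (Ent 0 0 0 0 0) (Ent ((- 2 / K) * b) 0 0 0 0) (Ent 0 0 (2 / K) 0 0) (Ent 0 0 0 0 0) (Ent 0 0 0 0 0) (Ent 0 0 0 0 0) (Ent 0 0 0 0 0) (Ent 0 0 0 0 0) (Ent 0 0 0 0 0) (Ent 0 0 0 0 0))"
|   "NL a b K D4 = (SM (Ent 0 0 0 0 0) (Ent 0 0 0 0 0) (Ent 0 0 0 0 0) (Ent 0 0 0 0 0) (Ent 0 0 0 0 0) (Ent 0 0 0 0 0) (Ent 0 0 0 0 0) (Ent 0 (2 / K) 0 0 0) (Ent ((2 / K) * a) 0 0 0 0) (Ent 0 0 0 0 0) (Ent 0 0 0 0 0) (Ent 0 0 0 0 0) (Ent 0 0 0 0 0) (Ent 0 0 0 0 0) (Ent 0 0 0 0 0) (Ent 0 0 0 0 0))"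
|   "NL a b K E1 = (SM (Ent 0 0 0 0 0) (Ent (K) 0 0 0 0) (Ent 0 0 0 0 0) (Ent 0 0 0 0 0) (Ent 0 0 0 0 0) (Ent 0 0 0 0 0) (Ent 0 0 0 0 0) (Ent 0 0 0 0 0) (Ent 0 0 0 0 0) (Ent 0 0 0 0 0) (Ent 0 0 0 0 0) (Ent 0 0 0 0 0) (Ent 0 0 0 0 0) (Ent 0 0 0 0 0) (Ent 0 0 0 0 0) (Ent 0 0 0 0 0))"
|   "NL a b K H1 = (SM (Ent (1) 0 0 0 0) (Ent 0 0 0 0 0) (Ent 0 0 0 0 0) (Ent 0 0 0 0 0) (Ent 0 0 0 0 0) (Ent (-1) 0 0 0 0) (Ent 0 0 0 0 0) (Ent 0 0 0 0 0) (Ent 0 0 0 0 0) (Ent 0 0 0 0 0) (Ent 0 0 0 0 0) (Ent 0 0 0 0 0) (Ent 0 0 0 0 0) (Ent 0 0 0 0 0) (Ent 0 0 0 0 0) (Ent 0 0 0 0 0))"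
|   "NL a b K F1 = (SM (Ent 0 0 0 0 0) (Ent 0 0 0 0 0) (Ent 0 0 0 0 0) (Ent 0 0 0 0 0) (Ent (- 4 / K) 0 0 0 0) (Ent 0 0 0 0 0) (Ent 0 0 0 0 0) (Ent 0 0 0 0 0) (Ent 0 0 0 0 0) (Ent 0 0 0 0 0) (Ent 0 0 0 0 0) (Ent 0 0 0 0 0) (Ent 0 0 0 0 0) (Ent 0 0 0 0 0) (Ent 0 0 0 0 0) (Ent 0 0 0 0 0))"
|   "NL a b K E2 = (SM (Ent 0 0 0 0 0) (Ent 0 0 0 0 0) (Ent 0 0 0 0 0) (Ent 0 0 0 0 0) (Ent 0 0 0 0 0) (Ent 0 0 0 0 0) (Ent 0 0 0 0 0) (Ent 0 0 0 0 0) (Ent 0 0 0 0 0) (Ent 0 0 0 0 0) (Ent 0 0 0 0 0) (Ent 0 0 0 0 0) (Ent 0 0 0 0 0) (Ent 0 0 0 0 0) (Ent (1) 0 0 0 0) (Ent 0 0 0 0 0))"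
|   "NL a b K H2 = (SM (Ent 0 0 0 0 0) (Ent 0 0 0 0 0) (Ent 0 0 0 0 0) (Ent 0 0 0 0 0) (Ent 0 0 0 0 0) (Ent 0 0 0 0 0) (Ent 0 0 0 0 0) (Ent 0 0 0 0 0) (Ent 0 0 0 0 0) (Ent 0 0 0 0 0) (Ent (- 1) 0 0 0 0) (Ent 0 0 0 0 0) (Ent 0 0 0 0 0) (Ent 0 0 0 0 0) (Ent 0 0 0 0 0) (Ent (1) 0 0 0 0))"
|   "NL a b K F2 = (SM (Ent 0 0 0 0 0) (Ent 0 0 0 0 0) (Ent 0 0 0 0 0) (Ent 0 0 0 0 0) (Ent 0 0 0 0 0) (Ent 0 0 0 0 0) (Ent 0 0 0 0 0) (Ent 0 0 0 0 0) (Ent 0 0 0 0 0) (Ent 0 0 0 0 0) (Ent 0 0 0 0 0) (Ent (- 1) 0 0 0 0) (Ent 0 0 0 0 0) (Ent 0 0 0 0 0) (Ent 0 0 0 0 0) (Ent 0 0 0 0 0))"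
|   "NL a b K C = (SM (Ent (- 2 * (K - 2) / K) 0 0 0 0) (Ent 0 0 0 0 0) (Ent 0 0 0 0 0) (Ent 0 0 0 0 0) (Ent 0 0 0 0 0) (Ent (- 2 * (K - 2) / K) 0 0 0 0) (Ent 0 0 0 0 0) (Ent 0 0 0 0 0) (Ent 0 0 0 0 0) (Ent 0 0 0 0 0) (Ent (- 2 * (K - 2) / K) 0 0 0 0) (Ent 0 0 0 0 0) (Ent 0 0 0 0 0) (Ent 0 0 0 0 0) (Ent 0 0 0 0 0) (Ent (- 2 * (K - 2) / K) 0 0 0 0))"
|   "NL a b K Cp = (SM (Ent 0 (2 * a / K) 0 0 0) (Ent 0 0 0 0 0) (Ent 0 0 0 0 0) (Ent 0 0 0 0 0) (Ent 0 0 0 0 0) (Ent 0 (2 * a / K) 0 0 0) (Ent 0 0 0 0 0) (Ent 0 0 0 0 0) (Ent 0 0 0 0 0) (Ent 0 0 0 0 0) (Ent 0 (2 * a / K) 0 0 0) (Ent 0 0 0 0 0) (Ent 0 0 0 0 0) (Ent 0 0 0 0 0) (Ent 0 0 0 0 0) (Ent 0 (2 * a / K) 0 0 0))"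
|   "NL a b K Cm = (SM (Ent 0 0 (2 * b / K) 0 0) (Ent 0 0 0 0 0) (Ent 0 0 0 0 0) (Ent 0 0 0 0 0) (Ent 0 0 0 0 0) (Ent 0 0 (2 * b / K) 0 0) (Ent 0 0 0 0 0) (Ent 0 0 0 0 0) (Ent 0 0 0 0 0) (Ent 0 0 0 0 0) (Ent 0 0 (2 * b / K) 0 0) (Ent 0 0 0 0 0) (Ent 0 0 0 0 0) (Ent 0 0 0 0 0) (Ent 0 0 0 0 0) (Ent 0 0 (2 * b / K) 0 0))"

definition allgb :: "gb list" where "allgb = [T1,T2,T3,T4,D1,D2,D3,D4,E1,H1,F1,E2,H2,F2,C,Cp,Cm]"

definition slc :: "complex \<Rightarrow> complex \<Rightarrow> complex \<Rightarrow> gamma \<Rightarrow> sm" where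
  "slc a b K g = foldr sadd (map (\<lambda>z. ssct (g z) (NL a b K z)) allgb) szero"

lemma mk_sget: "mk (sget P) = P" by (cases P) (simp add: mk_def)
lemma mk_sget': "mk (\<lambda>i j. sget P i j) = P" by (cases P) (simp add: mk_def)
lemma eadd_ezero: "eadd p ezero = p" "eadd ezero p = p" by (cases p; simp add: ezero_def)+
lemma emul_ezero: "emul p ezero = ezero" "emul ezero p = ezero" by (cases p; simp add: ezero_def)+
lemma esc_ezero: "esc c ezero = ezero" by (simp add: ezero_def)
lemma sget_szero: "sget szero i j = ezero" by (simp add: szero_def mk_def)
lemma sment_szero: "sment szero X = (\<lambda>i j. ezero)" "sment X szero = (\<lambda>i j. ezero)"
  by (auto intro!: ext simp: sment_def sget_szero emul_ezero eadd_ezero)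
lemma smm_szero: "smm szero X = szero" "smm X szero = szero"
  unfolding smm_def sment_szero by (simp_all add: szero_def)
lemma sadd_szero: "sadd X szero = X" "sadd szero X = X"
  by (simp_all add: sadd_def sget_szero eadd_ezero mk_sget')
lemma ssub_szero: "ssub X szero = X" "ssub szero szero = szero"
  by (simp_all add: ssub_def sget_szero eadd_ezero esc_ezero mk_sget' szero_def[symmetric])

lemma smbr_ee: "seven P = P \<Longrightarrow> seven Q = Q \<Longrightarrow> sodd P = szero \<Longrightarrow> sodd Q = szero \<Longrightarrow> smbr P Q = ssub (smm P Q) (smm Q P)"
  by (simp add: smbr_def smm_szero sadd_szero ssub_szero)
lemma smbr_eo: "seven P = P \<Longrightarrow> seven Q = szero \<Longrightarrow> sodd P = szero \<Longrightarrow> sodd Q = Q \<Longrightarrow> smbr P Q = ssub (smm P Q) (smm Q P)"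
  by (simp add: smbr_def smm_szero sadd_szero ssub_szero)
lemma smbr_oe: "seven P = szero \<Longrightarrow> seven Q = Q \<Longrightarrow> sodd P = P \<Longrightarrow> sodd Q = szero \<Longrightarrow> smbr P Q = ssub (smm P Q) (smm Q P)"
  by (simp add: smbr_def smm_szero sadd_szero ssub_szero)
lemma smbr_oo: "seven P = szero \<Longrightarrow> seven Q = szero \<Longrightarrow> sodd P = P \<Longrightarrow> sodd Q = Q \<Longrightarrow> smbr P Q = sadd (smm P Q) (smm Q P)"
  by (simp add: smbr_def smm_szero sadd_szero ssub_szero)

definition NB :: "complex \<Rightarrow> complex \<Rightarrow> gb \<Rightarrow> sm" where "NB a K x = NL a ((K-1)/a) K x"

lemma par_NB: "gb_odd x \<Longrightarrow> seven (NB a K x) = szero \<and> sodd (NB a K x) = NB a K x"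
  "\<not> gb_odd x \<Longrightarrow> seven (NB a K x) = NB a K x \<and> sodd (NB a K x) = szero"
  by (cases x; simp add: gb_odd_def NB_def seven_def sodd_def mk_def idx_odd_def szero_def ezero_def)+

lemma smbr_NB: "smbr (NB a K x) (NB a K y) = (if gb_odd x \<and> gb_odd y then sadd (smm (NB a K x) (NB a K y)) (smm (NB a K y) (NB a K x))
    else ssub (smm (NB a K x) (NB a K y)) (smm (NB a K y) (NB a K x)))"
  using par_NB[of x a K] par_NB[of y a K]
  by (cases "gb_odd x"; cases "gb_odd y") (simp_all add: smbr_ee smbr_eo smbr_oe smbr_oo)

lemma pair_T1: assumes "a \<noteq> 0" "K \<noteq> 0" shows "smbr (NB a K T1) (NB a K y) = slc a ((K-1)/a) K (gbr_basis T1 y)"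
  using assms unfolding smbr_NB
  apply (cases y)
  apply (simp_all add: gbr_basis_def tlookup_def gtable_def gb_odd_def)
  apply (simp_all add: NB_def smm_def sment_def sadd_def ssub_def ssct_def mk_def ezero_def slc_def allgb_def lc_def szero_def)
  apply (simp_all add: field_simps)
  done

lemma pair_T2: assumes "a \<noteq> 0" "K \<noteq> 0" shows "smbr (NB a K T2) (NB a K y) = slc a ((K-1)/a) K (gbr_basis T2 y)"
  using assms unfolding smbr_NB
  apply (cases y)
  apply (simp_all add: gbr_basis_def tlookup_def gtable_def gb_odd_def)
  apply (simp_all add: NB_def smm_def sment_def sadd_def ssub_def ssct_def mk_def ezero_def slc_def allgb_def lc_def szero_def)
  apply (simp_all add: field_simps)
  done

lemma pair_T3: assumes "a \<noteq> 0" "K \<noteq> 0" shows "smbr (NB a K T3) (NB a K y) = slc a ((K-1)/a) K (gbr_basis T3 y)"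
  using assms unfolding smbr_NB
  apply (cases y)
  apply (simp_all add: gbr_basis_def tlookup_def gtable_def gb_odd_def)
  apply (simp_all add: NB_def smm_def sment_def sadd_def ssub_def ssct_def mk_def ezero_def slc_def allgb_def lc_def szero_def)
  apply (simp_all add: field_simps)
  done

lemma pair_T4: assumes "a \<noteq> 0" "K \<noteq> 0" shows "smbr (NB a K T4) (NB a K y) = slc a ((K-1)/a) K (gbr_basis T4 y)"
  using assms unfolding smbr_NB
  apply (cases y)
  apply (simp_all add: gbr_basis_def tlookup_def gtable_def gb_odd_def)
  apply (simp_all add: NB_def smm_def sment_def sadd_def ssub_def ssct_def mk_def ezero_def slc_def allgb_def lc_def szero_def)
  apply (simp_all add: field_simps)
  done

lemma pair_D1: assumes "a \<noteq> 0" "K \<noteq> 0" shows "smbr (NB a K D1) (NB a K y) = slc a ((K-1)/a) K (gbr_basis D1 y)"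
  using assms unfolding smbr_NB
  apply (cases y)
  apply (simp_all add: gbr_basis_def tlookup_def gtable_def gb_odd_def)
  apply (simp_all add: NB_def smm_def sment_def sadd_def ssub_def ssct_def mk_def ezero_def slc_def allgb_def lc_def szero_def)
  apply (simp_all add: field_simps)
  done

lemma pair_D2: assumes "a \<noteq> 0" "K \<noteq> 0" shows "smbr (NB a K D2) (NB a K y) = slc a ((K-1)/a) K (gbr_basis D2 y)"
  using assms unfolding smbr_NB
  apply (cases y)
  apply (simp_all add: gbr_basis_def tlookup_def gtable_def gb_odd_def)
  apply (simp_all add: NB_def smm_def sment_def sadd_def ssub_def ssct_def mk_def ezero_def slc_def allgb_def lc_def szero_def)
  apply (simp_all add: field_simps)
  done

lemma pair_D3: assumes "a \<noteq> 0" "K \<noteq> 0" shows "smbr (NB a K D3) (NB a K y) = slc a ((K-1)/a) K (gbr_basis D3 y)"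
  using assms unfolding smbr_NB
  apply (cases y)
  apply (simp_all add: gbr_basis_def tlookup_def gtable_def gb_odd_def)
  apply (simp_all add: NB_def smm_def sment_def sadd_def ssub_def ssct_def mk_def ezero_def slc_def allgb_def lc_def szero_def)
  apply (simp_all add: field_simps)
  done

lemma pair_D4: assumes "a \<noteq> 0" "K \<noteq> 0" shows "smbr (NB a K D4) (NB a K y) = slc a ((K-1)/a) K (gbr_basis D4 y)"
  using assms unfolding smbr_NB
  apply (cases y)
  apply (simp_all add: gbr_basis_def tlookup_def gtable_def gb_odd_def)
  apply (simp_all add: NB_def smm_def sment_def sadd_def ssub_def ssct_def mk_def ezero_def slc_def allgb_def lc_def szero_def)
  apply (simp_all add: field_simps)
  done

lemma pair_E1: assumes "a \<noteq> 0" "K \<noteq> 0" shows "smbr (NB a K E1) (NB a K y) = slc a ((K-1)/a) K (gbr_basis E1 y)"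
  using assms unfolding smbr_NB
  apply (cases y)
  apply (simp_all add: gbr_basis_def tlookup_def gtable_def gb_odd_def)
  apply (simp_all add: NB_def smm_def sment_def sadd_def ssub_def ssct_def mk_def ezero_def slc_def allgb_def lc_def szero_def)
  apply (simp_all add: field_simps)
  done

lemma pair_H1: assumes "a \<noteq> 0" "K \<noteq> 0" shows "smbr (NB a K H1) (NB a K y) = slc a ((K-1)/a) K (gbr_basis H1 y)"
  using assms unfolding smbr_NB
  apply (cases y)
  apply (simp_all add: gbr_basis_def tlookup_def gtable_def gb_odd_def)
  apply (simp_all add: NB_def smm_def sment_def sadd_def ssub_def ssct_def mk_def ezero_def slc_def allgb_def lc_def szero_def)
  apply (simp_all add: field_simps)
  done

lemma pair_F1: assumes "a \<noteq> 0" "K \<noteq> 0" shows "smbr (NB a K F1) (NB a K y) = slc a ((K-1)/a) K (gbr_basis F1 y)"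
  using assms unfolding smbr_NB
  apply (cases y)
  apply (simp_all add: gbr_basis_def tlookup_def gtable_def gb_odd_def)
  apply (simp_all add: NB_def smm_def sment_def sadd_def ssub_def ssct_def mk_def ezero_def slc_def allgb_def lc_def szero_def)
  apply (simp_all add: field_simps)
  done

lemma pair_E2: assumes "a \<noteq> 0" "K \<noteq> 0" shows "smbr (NB a K E2) (NB a K y) = slc a ((K-1)/a) K (gbr_basis E2 y)"
  using assms unfolding smbr_NB
  apply (cases y)
  apply (simp_all add: gbr_basis_def tlookup_def gtable_def gb_odd_def)
  apply (simp_all add: NB_def smm_def sment_def sadd_def ssub_def ssct_def mk_def ezero_def slc_def allgb_def lc_def szero_def)
  apply (simp_all add: field_simps)
  done

lemma pair_H2: assumes "a \<noteq> 0" "K \<noteq> 0" shows "smbr (NB a K H2) (NB a K y) = slc a ((K-1)/a) K (gbr_basis H2 y)"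
  using assms unfolding smbr_NB
  apply (cases y)
  apply (simp_all add: gbr_basis_def tlookup_def gtable_def gb_odd_def)
  apply (simp_all add: NB_def smm_def sment_def sadd_def ssub_def ssct_def mk_def ezero_def slc_def allgb_def lc_def szero_def)
  apply (simp_all add: field_simps)
  done

lemma pair_F2: assumes "a \<noteq> 0" "K \<noteq> 0" shows "smbr (NB a K F2) (NB a K y) = slc a ((K-1)/a) K (gbr_basis F2 y)"
  using assms unfolding smbr_NB
  apply (cases y)
  apply (simp_all add: gbr_basis_def tlookup_def gtable_def gb_odd_def)
  apply (simp_all add: NB_def smm_def sment_def sadd_def ssub_def ssct_def mk_def ezero_def slc_def allgb_def lc_def szero_def)
  apply (simp_all add: field_simps)
  done

lemma pair_C: assumes "a \<noteq> 0" "K \<noteq> 0" shows "smbr (NB a K C) (NB a K y) = slc a ((K-1)/a) K (gbr_basis C y)"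
  using assms unfolding smbr_NB
  apply (cases y)
  apply (simp_all add: gbr_basis_def tlookup_def gtable_def gb_odd_def)
  apply (simp_all add: NB_def smm_def sment_def sadd_def ssub_def ssct_def mk_def ezero_def slc_def allgb_def lc_def szero_def)
  apply (simp_all add: field_simps)
  done

lemma pair_Cp: assumes "a \<noteq> 0" "K \<noteq> 0" shows "smbr (NB a K Cp) (NB a K y) = slc a ((K-1)/a) K (gbr_basis Cp y)"
  using assms unfolding smbr_NB
  apply (cases y)
  apply (simp_all add: gbr_basis_def tlookup_def gtable_def gb_odd_def)
  apply (simp_all add: NB_def smm_def sment_def sadd_def ssub_def ssct_def mk_def ezero_def slc_def allgb_def lc_def szero_def)
  apply (simp_all add: field_simps)
  done

lemma pair_Cm: assumes "a \<noteq> 0" "K \<noteq> 0" shows "smbr (NB a K Cm) (NB a K y) = slc a ((K-1)/a) K (gbr_basis Cm y)"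
  using assms unfolding smbr_NB
  apply (cases y)
  apply (simp_all add: gbr_basis_def tlookup_def gtable_def gb_odd_def)
  apply (simp_all add: NB_def smm_def sment_def sadd_def ssub_def ssct_def mk_def ezero_def slc_def allgb_def lc_def szero_def)
  apply (simp_all add: field_simps)
  done

lemma pair_all: assumes "a \<noteq> 0" "K \<noteq> 0" shows "smbr (NB a K x) (NB a K y) = slc a ((K-1)/a) K (gbr_basis x y)"
  using assms by (cases x) (simp_all add: pair_T1 pair_T2 pair_T3 pair_T4 pair_D1 pair_D2 pair_D3 pair_D4 pair_E1 pair_H1 pair_F1 pair_E2 pair_H2 pair_F2 pair_C pair_Cp pair_Cm)


lemma inr_simps: "inr 1 1" "inr 1 2" "inr 1 3" "inr 1 4" "inr 2 1" "inr 2 2" "inr 2 3" "inr 2 4"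
  "inr 3 1" "inr 3 2" "inr 3 3" "inr 3 4" "inr 4 1" "inr 4 2" "inr 4 3" "inr 4 4"
  by (auto simp: inr_def)

lemma to_ev: "psd_c c = ev (Ent c 0 0 0 0)" "tt = ev (Ent 0 1 0 0 0)" "uu = ev (Ent 0 0 1 0 0)"
  "psd_zero = ev ezero"
  by (auto intro!: ext simp: psd_c_def psd_mono_def one_val tt_val ezero_def psd_zero_def)

lemma ev_ops: "psd_smult c (ev p) = ev (esc c p)" "psd_add (ev p) (ev q) = ev (eadd p q)"
  by (simp_all add: ev_esc ev_eadd)

lemma munit_out: "\<not> inr k l \<Longrightarrow> inr k0 l0 \<Longrightarrow> munit w k0 l0 k l = psd_zero"
  by (auto simp: munit_def inr_def)
lemma mscal_out: "\<not> inr k l \<Longrightarrow> mscal w k l = psd_zero"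
  by (auto simp: mscal_def inr_def)

lemma tmat_TL: "tmat a b x = evm3 (TL a b x)"
proof (rule ext, rule ext)
  fix k l
  show "tmat a b x k l = evm3 (TL a b x) k l"
  proof (cases "inr k l")
    case True
    show ?thesis
      using inr_cases[OF True]
      by (elim disjE conjE; cases x;
          simp add: tmat_def evm3_def munit_def madd_def msub_def mscal_def to_ev ev_ops inr_def ezero_def
          del: ev.simps)
  next
    case False
    then have "evm3 (TL a b x) k l = psd_zero" by (simp add: evm3_def)
    moreover have "tmat a b x k l = psd_zero"
      by (cases x) (simp_all add: tmat_def madd_def msub_def munit_out[OF False] mscal_out[OF False] inr_def psd_add_zero psd_smult_zero)
    ultimately show ?thesis by simp
  qed
qed


definition sscale :: "complex \<Rightarrow> sm \<Rightarrow> sm" where "sscale c P = mk (\<lambda>i j. esc c (sget P i j))"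

lemma NL_TL: "NL a b K x = sscale (sc a b K x) (TL a b x)"
  by (cases x) (simp_all add: sscale_def mk_def)

lemma ev_trunc_esc: "ev (trunc (esc c p)) = psd_smult c (ev (trunc p))"
  by (cases p) (auto simp: psd_smult_def algebra_simps)

lemma evm3_sscale: "evm3 (sscale c P) = msmult c (evm3 P)"
  by (auto intro!: ext simp: evm3_def msmult_def sscale_def sget_mk ev_trunc_esc psd_smult_zero)

lemma sget_sadd: "inr k l \<Longrightarrow> sget (sadd P Q) k l = eadd (sget P k l) (sget Q k l)"
  by (simp add: sadd_def sget_mk)
lemma sget_ssct: "inr k l \<Longrightarrow> sget (ssct c P) k l = esc c (trunc (sget P k l))"
  by (simp add: ssct_def sget_mk)

lemma foldr_ev: "inr k l \<Longrightarrow> ev (sget (foldr sadd (map (\<lambda>z. ssct (g z) (F z)) zs) szero) k l) i j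
   = (\<Sum>z\<leftarrow>zs. g z * ev (trunc (sget (F z) k l)) i j)"
  by (induction zs) (simp_all add: sget_szero ev_ezero psd_zero_def sget_sadd sget_ssct ev_eadd ev_esc
     psd_add_def psd_smult_def)

lemma sum_allgb: "(\<Sum>z\<leftarrow>allgb. f z) = (\<Sum>z\<in>UNIV. f z)"
proof -
  have "distinct allgb" "set allgb = UNIV" by (simp_all add: allgb_def gb_UNIV)
  then show ?thesis by (metis sum_list_distinct_conv_sum_set)
qed

lemma slc_LC: "evm5 (slc a b K g) = (\<lambda>k l i j. \<Sum>z\<in>UNIV. g z * evm3 (NL a b K z) k l i j)"
  by (auto intro!: ext simp: evm5_def evm3_def slc_def foldr_ev sum_allgb psd_zero_def)

lemma inD_zero: "inD psd_zero" by (simp add: inD_def psd_zero_def)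
lemma inD_evm3: "inD (evm3 P k l)" by (simp add: evm3_def inD_ev_trunc inD_zero)
lemma inD_even: "(\<And>k l. inD (X k l)) \<Longrightarrow> inD (meven_part X k l)"
  by (simp add: meven_part_def inD_zero)
lemma inD_odd: "(\<And>k l. inD (X k l)) \<Longrightarrow> inD (modd_part X k l)"
  by (simp add: modd_part_def inD_zero)

definition LC :: "gamma \<Rightarrow> (gb \<Rightarrow> mat) \<Rightarrow> mat" where
  "LC u F = (\<lambda>k l i j. \<Sum>x\<in>UNIV. u x * F x k l i j)"
definition LC2 :: "gamma \<Rightarrow> gamma \<Rightarrow> (gb \<Rightarrow> gb \<Rightarrow> mat) \<Rightarrow> mat" where
  "LC2 u v G = (\<lambda>k l i j. \<Sum>x\<in>UNIV. \<Sum>y\<in>UNIV. u x * v y * G x y k l i j)"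

lemma even_LC: "meven_part (LC u F) = LC u (\<lambda>x. meven_part (F x))"
  by (auto intro!: ext simp: meven_part_def LC_def psd_zero_def)
lemma odd_LC: "modd_part (LC u F) = LC u (\<lambda>x. modd_part (F x))"
  by (auto intro!: ext simp: modd_part_def LC_def psd_zero_def)

lemma mmult_LC:
  assumes "\<And>x k l. inD (F x k l)" "\<And>y k l. inD (G y k l)"
  shows "mmult (LC u F) (LC v G) = LC2 u v (\<lambda>x y. mmult (F x) (G y))"
proof (intro ext)
  fix k l i j
  show "mmult (LC u F) (LC v G) k l i j = LC2 u v (\<lambda>x y. mmult (F x) (G y)) k l i j"
    unfolding mmult_def LC_def LC2_def
    by (simp add: psd_add_def psd_zero_def bilin assms distrib_left sum.distrib)
qed

lemma LC2_swap: "LC2 v u G = LC2 u v (\<lambda>x y. G y x)"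
  unfolding LC2_def
  by (intro ext, subst sum.swap) (simp add: mult_ac)

lemma mmult_LC_rev:
  assumes "\<And>x k l. inD (F x k l)" "\<And>y k l. inD (G y k l)"
  shows "mmult (LC v G) (LC u F) = LC2 u v (\<lambda>x y. mmult (G y) (F x))"
  using mmult_LC[OF assms(2,1), where u=v and v=u] LC2_swap by simp

lemma madd_LC2: "madd (LC2 u v G) (LC2 u v G') = LC2 u v (\<lambda>x y. madd (G x y) (G' x y))"
  by (auto intro!: ext simp: madd_def psd_add_def LC2_def distrib_left sum.distrib)
lemma msub_LC2: "msub (LC2 u v G) (LC2 u v G') = LC2 u v (\<lambda>x y. msub (G x y) (G' x y))"
  by (auto intro!: ext simp: msub_def psd_add_def psd_smult_def LC2_def sum_subtractf sum_negf right_diff_distrib)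

lemma mbr_LC:
  assumes "\<And>x k l. inD (F x k l)"
  shows "mbr (LC u F) (LC v F) = LC2 u v (\<lambda>x y. mbr (F x) (F y))"
proof -
  have e: "\<And>x k l. inD (meven_part (F x) k l)" "\<And>x k l. inD (modd_part (F x) k l)"
    using assms by (simp_all add: inD_even inD_odd)
  show ?thesis
    unfolding mbr_def comm_def acomm_def even_LC odd_LC
    by (simp add: mmult_LC[where u=u and v=v] mmult_LC_rev[where u=u and v=v] e madd_LC2 msub_LC2)
qed

lemma sum3_swap:
  fixes u v :: "gb \<Rightarrow> complex" and g :: "gb \<Rightarrow> gb \<Rightarrow> gb \<Rightarrow> complex" and N :: "gb \<Rightarrow> complex"
  shows "(\<Sum>z\<in>UNIV. (\<Sum>x\<in>UNIV. \<Sum>y\<in>UNIV. u x * v y * g x y z) * (N z :: complex))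
   = (\<Sum>x\<in>UNIV. \<Sum>y\<in>UNIV. u x * v y * (\<Sum>z\<in>UNIV. g x y z * N z))"
proof -
  have "(\<Sum>z\<in>UNIV. (\<Sum>x\<in>UNIV. \<Sum>y\<in>UNIV. u x * v y * g x y z) * (N z :: complex))
     = (\<Sum>z\<in>(UNIV::gb set). \<Sum>x\<in>(UNIV::gb set). \<Sum>y\<in>(UNIV::gb set). u x * v y * g x y z * N z)"
    by (simp add: sum_distrib_right)
  also have "\<dots> = (\<Sum>x\<in>UNIV. \<Sum>z\<in>UNIV. \<Sum>y\<in>UNIV. u x * v y * g x y z * N z)"
    by (rule sum.swap)
  also have "\<dots> = (\<Sum>x\<in>UNIV. \<Sum>y\<in>UNIV. \<Sum>z\<in>UNIV. u x * v y * g x y z * N z)"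
    by (rule sum.cong[OF refl], rule sum.swap)
  also have "\<dots> = (\<Sum>x\<in>UNIV. \<Sum>y\<in>UNIV. u x * v y * (\<Sum>z\<in>UNIV. g x y z * N z))"
    by (simp add: sum_distrib_left mult_ac)
  finally show ?thesis .
qed


lemma sc_nz: "a \<noteq> 0 \<Longrightarrow> b \<noteq> 0 \<Longrightarrow> K \<noteq> 0 \<Longrightarrow> K \<noteq> 2 \<Longrightarrow> sc a b K x \<noteq> 0"
  by (cases x) auto

lemma par_NL: "\<not> gb_odd x \<Longrightarrow> sodd (NL a b K x) = szero" "gb_odd x \<Longrightarrow> seven (NL a b K x) = szero"
  by (cases x; simp add: gb_odd_def sodd_def seven_def mk_def idx_odd_def szero_def ezero_def)+

lemma evm3_szero: "evm3 szero = (\<lambda>k l. psd_zero)"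
  by (auto intro!: ext simp: evm3_def sget_szero trunc_ezero ev_ezero)

lemma indep:
  assumes b: "b \<noteq> 0" and h: "\<And>k l i j. (\<Sum>x\<in>UNIV. w x * tmat a b x k l i j) = 0"
  shows "w x = 0"
proof -
  have e: "(\<Sum>x\<in>UNIV. w x * ev (trunc (sget (TL a b x) k l)) i j) = 0" if "inr k l" for k l i j
    using h[of k l i j] that by (simp add: tmat_TL evm3_def)
  have p: "(\<Sum>x\<in>UNIV. w x * ev (trunc (sget (TL a b x) k l)) i j) = 0" if "inr k l" for k l i j
    using e that by blast
  have "w E1 = 0" using p[OF inr_simps(2), of 0 0] by (simp add: gb_UNIV one_val tt_val uu_val add.commute)
  moreover have "w F1 = 0" using p[OF inr_simps(5), of 0 0] by (simp add: gb_UNIV one_val tt_val uu_val add.commute)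
  moreover have "w E2 = 0" using p[OF inr_simps(15), of 0 0] by (simp add: gb_UNIV one_val tt_val uu_val add.commute)
  moreover have "w F2 = 0" using p[OF inr_simps(12), of 0 0] by (simp add: gb_UNIV one_val tt_val uu_val add.commute)
  moreover have "w T3 = 0" using p[OF inr_simps(3), of 1 1] by (simp add: gb_UNIV one_val tt_val uu_val add.commute)
  moreover have "w T4 = 0" using p[OF inr_simps(3), of 0 0] b by (simp add: gb_UNIV one_val tt_val uu_val add.commute)
  moreover have "w T2 = 0" using p[OF inr_simps(4), of 1 1] by (simp add: gb_UNIV one_val tt_val uu_val add.commute)
  moreover have "w T1 = 0" using p[OF inr_simps(4), of 0 0] b by (simp add: gb_UNIV one_val tt_val uu_val add.commute)
  moreover have "w D4 = 0" using p[OF inr_simps(8), of 1 1] by (simp add: gb_UNIV one_val tt_val uu_val add.commute)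
  moreover have "w D3 = 0" using p[OF inr_simps(8), of 0 0] b by (simp add: gb_UNIV one_val tt_val uu_val add.commute)
  moreover have "w D1 = 0" using p[OF inr_simps(7), of 1 1] by (simp add: gb_UNIV one_val tt_val uu_val add.commute)
  moreover have "w D2 = 0" using p[OF inr_simps(7), of 0 0] b by (simp add: gb_UNIV one_val tt_val uu_val add.commute)
  moreover have "w Cp = 0" using p[OF inr_simps(1), of 1 1] by (simp add: gb_UNIV one_val tt_val uu_val add.commute)
  moreover have "w Cm = 0" using p[OF inr_simps(1), of "-1" "-1"] by (simp add: gb_UNIV one_val tt_val uu_val add.commute)
  moreover have wC: "w C = 0"
  proof -
    have c1: "w C + w H1 = 0" using p[OF inr_simps(1), of 0 0] by (simp add: gb_UNIV one_val tt_val uu_val add.commute)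
    have c2: "w C - w H1 = 0" using p[OF inr_simps(6), of 0 0] by (simp add: gb_UNIV one_val tt_val uu_val add.commute)
    have "2 * w C = (w C + w H1) + (w C - w H1)" by simp
    then show ?thesis using c1 c2 by simp
  qed
  moreover have "w H1 = 0" using p[OF inr_simps(1), of 0 0] wC by (simp add: gb_UNIV one_val tt_val uu_val add.commute)
  moreover have "w H2 = 0" using p[OF inr_simps(11), of 0 0] wC by (simp add: gb_UNIV one_val tt_val uu_val add.commute)
  ultimately show ?thesis by (cases x) auto
qed


theorem theorem4p2:
  fixes a b :: complex
  assumes "a * b \<noteq> 0" and "a * b \<noteq> 1" and "a * b \<noteq> -1"
  shows "\<exists>\<phi> :: gamma \<Rightarrow> mat.
           (\<forall>u v. \<phi> (\<lambda>z. u z + v z) = madd (\<phi> u) (\<phi> v))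
         \<and> (\<forall>c u. \<phi> (\<lambda>z. c * u z) = msmult c (\<phi> u))
         \<and> inj \<phi>
         \<and> range \<phi> = mspan a b
         \<and> (\<forall>u. gamma_even u \<longrightarrow> mat_even (\<phi> u))
         \<and> (\<forall>u. gamma_odd u \<longrightarrow> mat_odd (\<phi> u))
         \<and> (\<forall>u v. \<phi> (gbr u v) = mbr (\<phi> u) (\<phi> v))"
proof -
  define K where "K = a * b + 1"
  have a0: "a \<noteq> 0" and b0: "b \<noteq> 0" using assms(1) by auto
  have abK: "a * b = K - 1" by (simp add: K_def)
  have K0: "K \<noteq> 0" using assms(3) abK by auto
  have K2: "K \<noteq> 2" using assms(2) abK by auto
  have bK: "(K - 1) / a = b" using a0 by (simp add: K_def)
  define N where "N x = evm3 (NL a b K x)" for x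
  have N_t: "N x = msmult (sc a b K x) (tmat a b x)" for x
    by (simp add: N_def NL_TL evm3_sscale tmat_TL)
  have N_pt: "N x k l i j = sc a b K x * tmat a b x k l i j" for x k l i j
    by (simp add: N_t msmult_def psd_smult_def)
  have inDN: "inD (N x k l)" for x k l by (simp add: N_def inD_evm3)
  have NLB: "NL a b K x = NB a K x" for x by (simp add: NB_def bK)
  have brN: "mbr (N x) (N y) = LC (gbr_basis x y) N" for x y
  proof -
    have "mbr (N x) (N y) = evm5 (smbr (NB a K x) (NB a K y))" by (simp add: N_def mbr_evm NLB)
    also have "\<dots> = evm5 (slc a b K (gbr_basis x y))" using pair_all[OF a0 K0, of x y] by (simp add: bK)
    also have "\<dots> = LC (gbr_basis x y) N" by (simp add: slc_LC LC_def N_def)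
    finally show ?thesis .
  qed
  have scnz: "sc a b K x \<noteq> 0" for x using sc_nz[OF a0 b0 K0 K2] .
  have LCpt: "LC u N = (\<lambda>k l i j. \<Sum>x\<in>UNIV. (u x * sc a b K x) * tmat a b x k l i j)" for u
    by (simp add: LC_def N_pt mult.assoc)
  show ?thesis
  proof (intro exI[of _ "\<lambda>u. LC u N"] conjI allI impI)
    fix u v :: gamma
    show "LC (\<lambda>z. u z + v z) N = madd (LC u N) (LC v N)"
      by (auto intro!: ext simp: LC_def madd_def psd_add_def distrib_right sum.distrib)
  next
    fix c u
    show "LC (\<lambda>z. c * u z) N = msmult c (LC u N)"
      by (auto intro!: ext simp: LC_def msmult_def psd_smult_def sum_distrib_left mult.assoc)
  next
    show "inj (\<lambda>u. LC u N)"
    proof (rule injI)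
      fix u v assume eq: "LC u N = LC v N"
      have "(\<Sum>x\<in>UNIV. ((u x - v x) * sc a b K x) * tmat a b x k l i j) = 0" for k l i j
      proof -
        have "LC u N k l i j = LC v N k l i j" using eq by simp
        then show ?thesis
          by (simp add: LCpt algebra_simps sum_subtractf)
      qed
      then have "(u x - v x) * sc a b K x = 0" for x by (rule indep[OF b0])
      then show "u = v" using scnz by (auto intro!: ext)
    qed
  next
    show "range (\<lambda>u. LC u N) = mspan a b"
    proof (intro set_eqI iffI)
      fix X assume "X \<in> range (\<lambda>u. LC u N)"
      then obtain u where "X = LC u N" by auto
      then show "X \<in> mspan a b" unfolding mspan_def LCpt by (auto intro!: exI[of _ "\<lambda>x. u x * sc a b K x"])
    next
      fix X assume "X \<in> mspan a b"
      then obtain c where X: "X = (\<lambda>k l i j. \<Sum>x\<in>UNIV. c x * tmat a b x k l i j)" by (auto simp: mspan_def)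
      have "X = LC (\<lambda>x. c x / sc a b K x) N" unfolding X LCpt using scnz by simp
      then show "X \<in> range (\<lambda>u. LC u N)" by blast
    qed
  next
    fix u assume ue: "gamma_even u"
    have "modd_part (LC u N) k l i j = 0" for k l i j
    proof -
      have z: "u x * modd_part (N x) k l i j = 0" for x
      proof (cases "gb_odd x")
        case True then show ?thesis using ue by (simp add: gamma_even_def)
      next
        case False then show ?thesis by (simp add: N_def odd_evm par_NL evm3_szero psd_zero_def)
      qed
      show ?thesis unfolding odd_LC unfolding LC_def by (rule sum.neutral, rule ballI, rule z)
    qed
    then show "mat_even (LC u N)" by (auto intro!: ext simp: mat_even_def psd_zero_def)
  next
    fix u assume uo: "gamma_odd u"
    have "meven_part (LC u N) k l i j = 0" for k l i j
    proof -
      have z: "u x * meven_part (N x) k l i j = 0" for x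
      proof (cases "gb_odd x")
        case False then show ?thesis using uo by (simp add: gamma_odd_def)
      next
        case True then show ?thesis by (simp add: N_def even_evm par_NL evm3_szero psd_zero_def)
      qed
      show ?thesis unfolding even_LC unfolding LC_def by (rule sum.neutral, rule ballI, rule z)
    qed
    then show "mat_odd (LC u N)" by (auto intro!: ext simp: mat_odd_def psd_zero_def)
  next
    fix u v
    have "mbr (LC u N) (LC v N) = LC2 u v (\<lambda>x y. LC (gbr_basis x y) N)"
      using mbr_LC[OF inDN] brN by simp
    also have "\<dots> = LC (gbr u v) N"
      by (auto intro!: ext simp: LC2_def LC_def gbr_def sum3_swap)
    finally show "LC (gbr u v) N = mbr (LC u N) (LC v N)" by simp
  qed
qed


end
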